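(* Let $S\subseteq R$ be a set of long roots such that $\alpha+\beta\notin R$ for all $\alpha,\beta\in S$ and $(\gamma+R)\cap(S+S)=\emptyset$ for all $\gamma\in R\setminus S$. For $\alpha\in S$ set $\alpha^\perp=\{\gamma\in S:(\alpha,\gamma)=0\}$. Then $\#\alpha^\perp=\#\beta^\perp$ for all $\alpha,\beta\in S$.
   Context: $R$ is the root system of a complex simple Lie algebra with the form $(\cdot,\cdot)$ induced by the Killing form. $S+S=\{\alpha+\beta:\alpha,\beta\in S\}$, $\gamma+R=\{\gamma+\delta:\delta\in R\}$. *)

theory Defs
  imports "HOL-Analysis.Analysis"
begin

text \<open>The form induced by the Killing form on the real span of the roots of a complex
  simple Lie algebra is a positive definite inner product; for an irreducible root
  system it is unique up to a positive scalar, so we use the ambient inner product.\<close>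

definition root_reflection :: "'a::euclidean_space \<Rightarrow> 'a \<Rightarrow> 'a" where
  "root_reflection a x = x - (2 * (x \<bullet> a) / (a \<bullet> a)) *\<^sub>R a"

definition root_system :: "'a::euclidean_space set \<Rightarrow> bool" where
  "root_system R \<longleftrightarrow>
     finite R \<and> 0 \<notin> R \<and> span R = UNIV \<and>
     (\<forall>a\<in>R. root_reflection a ` R = R) \<and>
     (\<forall>a\<in>R. \<forall>b\<in>R. 2 * (b \<bullet> a) / (a \<bullet> a) \<in> \<int>) \<and>
     (\<forall>a\<in>R. \<forall>c::real. c *\<^sub>R a \<in> R \<longrightarrow> c = 1 \<or> c = -1)"

text \<open>Root systems of complex simple Lie algebras = nonempty irreducible reduced root systems.\<close>
definition irreducible_root_system :: "'a::euclidean_space set \<Rightarrow> bool" where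
  "irreducible_root_system R \<longleftrightarrow>
     root_system R \<and> R \<noteq> {} \<and>
     \<not> (\<exists>R1 R2. R1 \<noteq> {} \<and> R2 \<noteq> {} \<and> R1 \<union> R2 = R \<and>
            (\<forall>a\<in>R1. \<forall>b\<in>R2. a \<bullet> b = 0))"

definition long_root :: "'a::euclidean_space set \<Rightarrow> 'a \<Rightarrow> bool" where
  "long_root R a \<longleftrightarrow> a \<in> R \<and> (\<forall>b\<in>R. b \<bullet> b \<le> a \<bullet> a)"

definition root_perp :: "'a::euclidean_space set \<Rightarrow> 'a \<Rightarrow> 'a set" where
  "root_perp S a = {g \<in> S. a \<bullet> g = 0}"

end

theory Submission
  imports Defs
begin

lemma rs_fin: "root_system R \<Longrightarrow> finite R" unfolding root_system_def by blast
lemma rs_0: "root_system R \<Longrightarrow> 0 \<notin> R" unfolding root_system_def by blast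
lemma rs_refl: "root_system R \<Longrightarrow> a \<in> R \<Longrightarrow> x \<in> R \<Longrightarrow> root_reflection a x \<in> R"
  unfolding root_system_def by blast
lemma rs_int: "root_system R \<Longrightarrow> a \<in> R \<Longrightarrow> b \<in> R \<Longrightarrow> 2 * (b \<bullet> a) / (a \<bullet> a) \<in> \<int>"
  unfolding root_system_def by blast
lemma rs_red: "root_system R \<Longrightarrow> a \<in> R \<Longrightarrow> c *\<^sub>R a \<in> R \<Longrightarrow> c = 1 \<or> c = -1"
  unfolding root_system_def by blast

lemma rs_pos: "root_system R \<Longrightarrow> a \<in> R \<Longrightarrow> a \<bullet> a > 0"
  using rs_0 by fastforce

lemma refl_self: "a \<bullet> a \<noteq> 0 \<Longrightarrow> root_reflection a a = - a"
  by (simp add: root_reflection_def algebra_simps scaleR_2)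

lemma rs_neg: "root_system R \<Longrightarrow> a \<in> R \<Longrightarrow> - a \<in> R"
  by (metis rs_refl refl_self rs_pos less_irrefl)

lemma refl_inner: assumes "a \<bullet> a \<noteq> 0"
  shows "root_reflection a x \<bullet> root_reflection a y = x \<bullet> y"
  using assms by (simp add: root_reflection_def inner_diff_left inner_diff_right inner_commute field_simps)

lemma refl_invol: assumes "a \<bullet> a \<noteq> 0"
  shows "root_reflection a (root_reflection a x) = x"
proof -
  have "root_reflection a x \<bullet> a = - (x \<bullet> a)"
    using assms by (simp add: root_reflection_def inner_diff_left)
  then show ?thesis using assms by (simp add: root_reflection_def algebra_simps)
qed

lemma refl_minus: assumes "x \<bullet> a = (a \<bullet> a) / 2" "a \<bullet> a \<noteq> 0" shows "root_reflection a x = x - a"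
proof -
  have h: "2 * (x \<bullet> a) / (a \<bullet> a) = 1" using assms by (simp add: field_simps)
  show ?thesis unfolding root_reflection_def h by simp
qed

lemma refl_plus: assumes "x \<bullet> a = - (a \<bullet> a) / 2" "a \<bullet> a \<noteq> 0" shows "root_reflection a x = x + a"
proof -
  have h: "2 * (x \<bullet> a) / (a \<bullet> a) = -1" using assms by (simp add: field_simps)
  show ?thesis unfolding root_reflection_def h by simp
qed

lemma cs_aux:
  fixes x a :: "'a::euclidean_space"
  assumes a0: "a \<bullet> a > 0"
  shows "(x \<bullet> a)^2 \<le> (x \<bullet> x) * (a \<bullet> a)"
    and "(x \<bullet> a)^2 = (x \<bullet> x) * (a \<bullet> a) \<Longrightarrow> x = ((x \<bullet> a) / (a \<bullet> a)) *\<^sub>R a"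
proof -
  define v where "v = (a \<bullet> a) *\<^sub>R x - (x \<bullet> a) *\<^sub>R a"
  have vv: "v \<bullet> v = (a \<bullet> a) * ((a \<bullet> a) * (x \<bullet> x) - (x \<bullet> a)^2)"
    unfolding v_def by (simp add: inner_diff_left inner_diff_right algebra_simps power2_eq_square inner_commute)
  have "0 \<le> v \<bullet> v" by simp
  then have "0 \<le> (a \<bullet> a) * ((a \<bullet> a) * (x \<bullet> x) - (x \<bullet> a)^2)" using vv by simp
  then show "(x \<bullet> a)^2 \<le> (x \<bullet> x) * (a \<bullet> a)" using a0
    by (simp add: zero_le_mult_iff algebra_simps)
  assume "(x \<bullet> a)^2 = (x \<bullet> x) * (a \<bullet> a)"
  then have "v \<bullet> v = 0" using vv by (simp add: algebra_simps)
  then have "v = 0" by simp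
  then have "(a \<bullet> a) *\<^sub>R x = (x \<bullet> a) *\<^sub>R a" unfolding v_def by simp
  then have "(1 / (a \<bullet> a)) *\<^sub>R ((a \<bullet> a) *\<^sub>R x) = (1 / (a \<bullet> a)) *\<^sub>R ((x \<bullet> a) *\<^sub>R a)" by simp
  then show "x = ((x \<bullet> a) / (a \<bullet> a)) *\<^sub>R a" using a0 by simp
qed

lemma long_coeff:
  assumes rs: "root_system R" and a: "a \<in> R" and lg: "\<forall>b\<in>R. b \<bullet> b \<le> a \<bullet> a"
    and x: "x \<in> R" "x \<noteq> a" "x \<noteq> -a"
  shows "2 * (x \<bullet> a) / (a \<bullet> a) = -1 \<or> 2 * (x \<bullet> a) / (a \<bullet> a) = 0 \<or> 2 * (x \<bullet> a) / (a \<bullet> a) = 1"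
proof -
  have a0: "a \<bullet> a > 0" using rs_pos[OF rs a] .
  have xa: "x \<bullet> x \<le> a \<bullet> a" using lg x by auto
  obtain n where n: "2 * (x \<bullet> a) / (a \<bullet> a) = of_int n" using rs_int[OF rs a x(1)] Ints_cases by metis
  have cs: "(x \<bullet> a)^2 < (x \<bullet> x) * (a \<bullet> a)"
  proof -
    have le: "(x \<bullet> a)^2 \<le> (x \<bullet> x) * (a \<bullet> a)" using cs_aux(1)[OF a0] .
    have "(x \<bullet> a)^2 \<noteq> (x \<bullet> x) * (a \<bullet> a)"
    proof
      assume "(x \<bullet> a)^2 = (x \<bullet> x) * (a \<bullet> a)"
      then have e: "x = ((x \<bullet> a) / (a \<bullet> a)) *\<^sub>R a" using cs_aux(2)[OF a0] by blast
      then have "((x \<bullet> a) / (a \<bullet> a)) *\<^sub>R a \<in> R" using x(1) by simp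
      then have "(x \<bullet> a) / (a \<bullet> a) = 1 \<or> (x \<bullet> a) / (a \<bullet> a) = -1" using rs_red[OF rs a] by blast
      then show False using e x(2,3) by (metis scaleR_one scaleR_minus1_left)
    qed
    then show ?thesis using le by simp
  qed
  have "(x \<bullet> x) * (a \<bullet> a) \<le> (a \<bullet> a) * (a \<bullet> a)" using xa a0 by (simp add: mult_right_mono)
  then have "\<bar>x \<bullet> a\<bar>^2 < (a \<bullet> a)^2" using cs by (simp add: power2_eq_square)
  then have t: "\<bar>x \<bullet> a\<bar> < a \<bullet> a" using a0 by (meson abs_ge_zero less_le_not_le power_less_imp_less_base)
  have "\<bar>2 * (x \<bullet> a) / (a \<bullet> a)\<bar> = 2 * \<bar>x \<bullet> a\<bar> / (a \<bullet> a)" using a0 by (simp add: abs_mult)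
  also have "\<dots> < 2" using t a0 by (simp add: field_simps)
  finally have "\<bar>real_of_int n\<bar> < 2" using n by simp
  then have "\<bar>n\<bar> < 2" by linarith
  then have "n = -1 \<or> n = 0 \<or> n = 1" by linarith
  then show ?thesis using n by auto
qed

definition adjR :: "'a::euclidean_space set \<Rightarrow> ('a \<times> 'a) set" where
  "adjR R = {(x,y). x \<in> R \<and> y \<in> R \<and> x \<bullet> y \<noteq> 0}"

lemma common_nb:
  assumes rs: "root_system R" and ab: "(a, b) \<in> (adjR R)\<^sup>*" and a: "a \<in> R"
  shows "a \<bullet> b \<noteq> 0 \<or> (\<exists>c\<in>R. a \<bullet> c \<noteq> 0 \<and> c \<bullet> b \<noteq> 0)"
  using ab
proof (induction rule: rtrancl_induct)
  case base
  then show ?case using rs_pos[OF rs a] by simp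
next
  case (step y z)
  from step.hyps(2) have y: "y \<in> R" and z: "z \<in> R" and yz: "y \<bullet> z \<noteq> 0" by (auto simp: adjR_def)
  show ?case
  proof (cases "a \<bullet> z \<noteq> 0")
    case True then show ?thesis by simp
  next
    case False
    then have az: "a \<bullet> z = 0" by simp
    show ?thesis
    proof (cases "a \<bullet> y \<noteq> 0")
      case True then show ?thesis using y yz by blast
    next
      case False
      then have ay: "a \<bullet> y = 0" by simp
      from step.IH ay obtain c where c: "c \<in> R" "a \<bullet> c \<noteq> 0" "c \<bullet> y \<noteq> 0" by auto
      show ?thesis
      proof (cases "c \<bullet> z \<noteq> 0")
        case True then show ?thesis using c by blast
      next
        case False
        then have cz: "c \<bullet> z = 0" by simp
        define d where "d = root_reflection y c"
        have dR: "d \<in> R" unfolding d_def using rs_refl[OF rs y c(1)] .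
        have yy: "y \<bullet> y > 0" using rs_pos[OF rs y] .
        have "a \<bullet> d = a \<bullet> c" unfolding d_def root_reflection_def using ay
          by (simp add: inner_diff_right)
        moreover have "d \<bullet> z = - (2 * (c \<bullet> y) / (y \<bullet> y)) * (y \<bullet> z)"
          unfolding d_def root_reflection_def using cz by (simp add: inner_diff_left)
        moreover have "2 * (c \<bullet> y) / (y \<bullet> y) \<noteq> 0" using c(3) yy by simp
        ultimately have "d \<bullet> z \<noteq> 0" "a \<bullet> d \<noteq> 0" using yz c(2) by auto
        then show ?thesis using dR by blast
      qed
    qed
  qed
qed

lemma irr_connected:
  assumes irr: "irreducible_root_system R" and a: "a \<in> R" and b: "b \<in> R"
  shows "(a, b) \<in> (adjR R)\<^sup>*"
proof (rule ccontr)
  assume nb: "(a, b) \<notin> (adjR R)\<^sup>*"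
  define R1 where "R1 = {x\<in>R. (a, x) \<in> (adjR R)\<^sup>*}"
  define R2 where "R2 = R - R1"
  have "R1 \<noteq> {}" using a unfolding R1_def by auto
  moreover have "R2 \<noteq> {}" using b nb unfolding R2_def R1_def by auto
  moreover have "R1 \<union> R2 = R" unfolding R1_def R2_def by auto
  moreover have "\<forall>x\<in>R1. \<forall>y\<in>R2. x \<bullet> y = 0"
  proof (intro ballI, rule ccontr)
    fix x y assume x: "x \<in> R1" and y: "y \<in> R2" and "x \<bullet> y \<noteq> 0"
    then have "(x, y) \<in> adjR R" unfolding adjR_def R1_def R2_def by auto
    then have "(a, y) \<in> (adjR R)\<^sup>*" using x unfolding R1_def by auto
    then show False using y unfolding R1_def R2_def by auto
  qed
  ultimately show False using irr unfolding irreducible_root_system_def by blast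
qed


lemma long_eq: "long_root R a \<Longrightarrow> long_root R b \<Longrightarrow> a \<bullet> a = b \<bullet> b"
  unfolding long_root_def by (meson antisym)

lemma perp_le:
  fixes R S :: "'a::euclidean_space set"
  assumes rs: "root_system R" and SR: "S \<subseteq> R" and long: "\<forall>a\<in>S. long_root R a"
    and h4: "\<forall>a\<in>S. \<forall>b\<in>S. a + b \<notin> R"
    and h5: "\<forall>\<gamma>\<in>R - S. ((\<lambda>\<delta>. \<gamma> + \<delta>) ` R) \<inter> {a + b | a b. a \<in> S \<and> b \<in> S} = {}"
    and al: "\<alpha> \<in> S" and be: "\<beta> \<in> S" and ab: "\<alpha> \<bullet> \<beta> = (\<alpha> \<bullet> \<alpha>) / 2"
  shows "card (root_perp S \<alpha>) \<le> card (root_perp S \<beta>)"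
proof -
  define L where "L = \<alpha> \<bullet> \<alpha>"
  have alR: "\<alpha> \<in> R" and beR: "\<beta> \<in> R" using al be SR by auto
  have L0: "L > 0" unfolding L_def using rs_pos[OF rs alR] .
  have bb: "\<beta> \<bullet> \<beta> = L" unfolding L_def using long al be by (metis long_eq)
  have maxL: "\<forall>b\<in>R. b \<bullet> b \<le> L" using long al unfolding L_def long_root_def by auto
  define g where "g = \<alpha> - \<beta>"
  have "root_reflection \<beta> \<alpha> = \<alpha> - \<beta>"
    using ab bb L0 unfolding L_def by (intro refl_minus) auto
  then have gR: "g \<in> R" unfolding g_def using rs_refl[OF rs beR alR] by simp
  have gg: "g \<bullet> g = L" unfolding g_def using ab bb
    by (simp add: inner_diff_left inner_diff_right inner_commute L_def)
  have ag: "\<alpha> \<bullet> g = L / 2" unfolding g_def using ab by (simp add: inner_diff_right L_def)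
  define s where "s = root_reflection g"
  have gg0: "g \<bullet> g \<noteq> 0" using gg L0 by simp
  have "root_reflection g \<alpha> = \<alpha> - g" using ag gg gg0 by (intro refl_minus) auto
  then have sa: "s \<alpha> = \<beta>" unfolding s_def g_def by simp
  have sS: "s \<delta> \<in> S" if d: "\<delta> \<in> S" for \<delta>
  proof -
    have dR: "\<delta> \<in> R" using d SR by auto
    have "\<delta> \<noteq> g"
    proof
      assume "\<delta> = g" then have "\<delta> + \<beta> = \<alpha>" unfolding g_def by simp
      then show False using h4 d be alR by metis
    qed
    moreover have "\<delta> \<noteq> - g"
    proof
      assume "\<delta> = - g" then have "\<delta> + \<alpha> = \<beta>" unfolding g_def by simp
      then show False using h4 d al beR by metis
    qed
    ultimately have n: "2 * (\<delta> \<bullet> g) / (g \<bullet> g) = -1 \<or> 2 * (\<delta> \<bullet> g) / (g \<bullet> g) = 0 \<or> 2 * (\<delta> \<bullet> g) / (g \<bullet> g) = 1"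
      using long_coeff[OF rs gR _ dR] maxL gg by auto
    have sdR: "s \<delta> \<in> R" unfolding s_def using rs_refl[OF rs gR dR] .
    show ?thesis
    proof -
      { assume n1: "2 * (\<delta> \<bullet> g) / (g \<bullet> g) = 1"
        then have "s \<delta> = \<delta> - g" unfolding s_def root_reflection_def n1 by simp
        then have e: "s \<delta> + \<alpha> = \<delta> + \<beta>" unfolding g_def by (simp add: algebra_simps)
        have ?thesis
        proof (rule ccontr)
          assume "s \<delta> \<notin> S"
          then have "((\<lambda>x. s \<delta> + x) ` R) \<inter> {a + b | a b. a \<in> S \<and> b \<in> S} = {}" using h5 sdR by auto
          moreover have "s \<delta> + \<alpha> \<in> ((\<lambda>x. s \<delta> + x) ` R)" using alR by auto
          moreover have "s \<delta> + \<alpha> \<in> {a + b | a b. a \<in> S \<and> b \<in> S}" using e d be by auto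
          ultimately show False by blast
        qed }
      moreover
      { assume n1: "2 * (\<delta> \<bullet> g) / (g \<bullet> g) = -1"
        then have "s \<delta> = \<delta> + g" unfolding s_def root_reflection_def n1 by simp
        then have e: "s \<delta> + \<beta> = \<delta> + \<alpha>" unfolding g_def by (simp add: algebra_simps)
        have ?thesis
        proof (rule ccontr)
          assume "s \<delta> \<notin> S"
          then have "((\<lambda>x. s \<delta> + x) ` R) \<inter> {a + b | a b. a \<in> S \<and> b \<in> S} = {}" using h5 sdR by auto
          moreover have "s \<delta> + \<beta> \<in> ((\<lambda>x. s \<delta> + x) ` R)" using beR by auto
          moreover have "s \<delta> + \<beta> \<in> {a + b | a b. a \<in> S \<and> b \<in> S} " using e d al by auto
          ultimately show False by blast
        qed }
      moreover
      { assume n1: "2 * (\<delta> \<bullet> g) / (g \<bullet> g) = 0"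
        then have "s \<delta> = \<delta>" unfolding s_def root_reflection_def n1 by simp
        then have ?thesis using d by simp }
      ultimately show ?thesis using n by blast
    qed
  qed
  have sub: "s ` root_perp S \<alpha> \<subseteq> root_perp S \<beta>"
  proof
    fix y assume "y \<in> s ` root_perp S \<alpha>"
    then obtain \<delta> where d: "\<delta> \<in> S" "\<alpha> \<bullet> \<delta> = 0" and y: "y = s \<delta>" unfolding root_perp_def by auto
    have "\<beta> \<bullet> y = \<alpha> \<bullet> \<delta>" unfolding y sa[symmetric] s_def using refl_inner[OF gg0] by simp
    then show "y \<in> root_perp S \<beta>" unfolding root_perp_def using sS[OF d(1)] d(2) y by simp
  qed
  have inj: "inj_on s (root_perp S \<alpha>)"
    by (metis inj_on_inverseI refl_invol[OF gg0] s_def)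
  have fin: "finite (root_perp S \<beta>)"
  proof (rule finite_subset[OF _ rs_fin[OF rs]])
    show "root_perp S \<beta> \<subseteq> R" using SR unfolding root_perp_def by auto
  qed
  show ?thesis using card_inj_on_le[OF inj sub fin] .
qed

theorem mainTheorem17:
  fixes R S :: "'a::euclidean_space set"
  assumes "irreducible_root_system R"
    and "S \<subseteq> R"
    and "\<forall>a\<in>S. long_root R a"
    and "\<forall>a\<in>S. \<forall>b\<in>S. a + b \<notin> R"
    and "\<forall>\<gamma>\<in>R - S. ((\<lambda>\<delta>. \<gamma> + \<delta>) ` R) \<inter> {a + b | a b. a \<in> S \<and> b \<in> S} = {}"
  shows "\<forall>a\<in>S. \<forall>b\<in>S. card (root_perp S a) = card (root_perp S b)"
proof (intro ballI)
  note irr = assms(1) and SR = assms(2) and long = assms(3) and h4 = assms(4) and h5 = assms(5)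
  have rs: "root_system R" using irr unfolding irreducible_root_system_def by blast
  fix \<alpha> \<beta> assume al: "\<alpha> \<in> S" and be: "\<beta> \<in> S"
  define L where "L = \<alpha> \<bullet> \<alpha>"
  have alR: "\<alpha> \<in> R" and beR: "\<beta> \<in> R" using al be SR by auto
  have L0: "L > 0" unfolding L_def using rs_pos[OF rs alR] .
  have bb: "\<beta> \<bullet> \<beta> = L" unfolding L_def using long al be by (metis long_eq)
  have maxL: "\<forall>b\<in>R. b \<bullet> b \<le> L" using long al unfolding L_def long_root_def by auto
  have maxLb: "\<forall>b\<in>R. b \<bullet> b \<le> \<beta> \<bullet> \<beta>" using maxL bb by simp
  have equiv: "card (root_perp S x) = card (root_perp S y)"
    if "x \<in> S" "y \<in> S" "x \<bullet> y = L / 2" for x y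
  proof -
    have xx: "x \<bullet> x = L" "y \<bullet> y = L" unfolding L_def using long that al by (metis long_eq)+
    show ?thesis
      using perp_le[OF rs SR long h4 h5 that(1,2)] perp_le[OF rs SR long h4 h5 that(2,1)] that xx
      by (simp add: inner_commute)
  qed
  show "card (root_perp S \<alpha>) = card (root_perp S \<beta>)"
  proof (cases "\<beta> = \<alpha> \<or> \<beta> = - \<alpha>")
    case True
    then show ?thesis unfolding root_perp_def by auto
  next
    case False
    then have n: "2 * (\<beta> \<bullet> \<alpha>) / L = -1 \<or> 2 * (\<beta> \<bullet> \<alpha>) / L = 0 \<or> 2 * (\<beta> \<bullet> \<alpha>) / L = 1"
      using long_coeff[OF rs alR _ beR] maxL unfolding L_def by auto
    { assume "2 * (\<beta> \<bullet> \<alpha>) / L = -1"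
      then have "\<beta> \<bullet> \<alpha> = - (\<alpha> \<bullet> \<alpha>) / 2" using L0 unfolding L_def by (simp add: field_simps)
      then have "root_reflection \<alpha> \<beta> = \<beta> + \<alpha>" using refl_plus L0 unfolding L_def by simp
      then have "\<beta> + \<alpha> \<in> R" using rs_refl[OF rs alR beR] by simp
      then have ?thesis using h4 al be by blast }
    moreover
    { assume "2 * (\<beta> \<bullet> \<alpha>) / L = 1"
      then have "\<alpha> \<bullet> \<beta> = L / 2" using L0 by (simp add: field_simps inner_commute)
      then have ?thesis using equiv al be by blast }
    moreover
    { assume "2 * (\<beta> \<bullet> \<alpha>) / L = 0"
      then have ab0: "\<alpha> \<bullet> \<beta> = 0" using L0 by (simp add: inner_commute)
      obtain c where c: "c \<in> R" "\<alpha> \<bullet> c \<noteq> 0" "c \<bullet> \<beta> \<noteq> 0"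
        using common_nb[OF rs irr_connected[OF irr alR beR] alR] ab0 by auto
      have cna: "c \<noteq> \<alpha>" "c \<noteq> - \<alpha>" using c(3) ab0 by (auto simp: inner_commute)
      have cnb: "c \<noteq> \<beta>" "c \<noteq> - \<beta>" using c(2) ab0 by auto
      have ca: "2 * (c \<bullet> \<alpha>) / L = -1 \<or> 2 * (c \<bullet> \<alpha>) / L = 1"
        using long_coeff[OF rs alR _ c(1) cna] maxL c(2) unfolding L_def by (auto simp: inner_commute)
      have cb: "2 * (c \<bullet> \<beta>) / L = -1 \<or> 2 * (c \<bullet> \<beta>) / L = 1"
        using long_coeff[OF rs beR maxLb c(1) cnb] c(3) bb by auto
      obtain c1 where c1: "c1 \<in> R" "c1 \<bullet> \<alpha> = L / 2" "c1 \<bullet> \<beta> = L / 2 \<or> c1 \<bullet> \<beta> = - L / 2"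
      proof (cases "2 * (c \<bullet> \<alpha>) / L = 1")
        case True
        then show ?thesis using that[of c] c(1) cb L0 by (auto simp: field_simps)
      next
        case False
        then have "2 * (c \<bullet> \<alpha>) / L = -1" using ca by blast
        then show ?thesis using that[of "-c"] rs_neg[OF rs c(1)] cb L0 by (auto simp: field_simps)
      qed
      obtain \<eta> where eta: "\<eta> \<in> R" "\<eta> \<bullet> \<alpha> = L / 2" "\<eta> \<bullet> \<beta> = L / 2"
      proof (cases "c1 \<bullet> \<beta> = L / 2")
        case True
        then show ?thesis using that c1 by blast
      next
        case False
        then have m: "c1 \<bullet> \<beta> = - (\<beta> \<bullet> \<beta>) / 2" using c1(3) bb by simp
        have "root_reflection \<beta> c1 = c1 + \<beta>" using refl_plus[OF m] bb L0 by simp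
        then have "c1 + \<beta> \<in> R" using rs_refl[OF rs beR c1(1)] by simp
        moreover have "(c1 + \<beta>) \<bullet> \<alpha> = L / 2" using c1(2) ab0 by (simp add: inner_add_left inner_add_right inner_commute)
        moreover have "(c1 + \<beta>) \<bullet> \<beta> = L / 2" using m bb by (simp add: inner_add_left)
        ultimately show ?thesis using that by blast
      qed
      have e1: "root_reflection \<alpha> \<eta> = \<eta> - \<alpha>" using refl_minus[of \<eta> \<alpha>] eta(2) L0 unfolding L_def by simp
      have e1R: "\<eta> - \<alpha> \<in> R" using rs_refl[OF rs alR eta(1)] e1 by simp
      have hb: "(\<eta> - \<alpha>) \<bullet> \<beta> = (\<beta> \<bullet> \<beta>) / 2" using eta(3) ab0 bb by (simp add: inner_diff_left)
      have "root_reflection \<beta> (\<eta> - \<alpha>) = \<eta> - \<alpha> - \<beta>" using bb L0 by (intro refl_minus[OF hb]) simp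
      then have "\<eta> - \<alpha> - \<beta> \<in> R" using rs_refl[OF rs beR e1R] by simp
      then have "- (\<eta> - \<alpha> - \<beta>) \<in> R" using rs_neg[OF rs] by blast
      moreover have "- (\<eta> - \<alpha> - \<beta>) = \<alpha> + \<beta> - \<eta>" by (simp add: algebra_simps)
      ultimately have dR: "\<alpha> + \<beta> - \<eta> \<in> R" by metis
      have etaS: "\<eta> \<in> S"
      proof (rule ccontr)
        assume "\<eta> \<notin> S"
        then have "((\<lambda>x. \<eta> + x) ` R) \<inter> {a + b | a b. a \<in> S \<and> b \<in> S} = {}" using h5 eta(1) by auto
        moreover have "\<eta> + (\<alpha> + \<beta> - \<eta>) \<in> ((\<lambda>x. \<eta> + x) ` R)" using dR by blast
        moreover have "\<eta> + (\<alpha> + \<beta> - \<eta>) \<in> {a + b | a b. a \<in> S \<and> b \<in> S}" using al be by auto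
        ultimately show False by blast
      qed
      have ?thesis using equiv[OF al etaS] equiv[OF etaS be] eta by (simp add: inner_commute) }
    ultimately show ?thesis using n by blast
  qed
qed

end
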